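(* Let $d\ge2$ and suppose $f:\mathbb{R}^d_+\to\mathbb{R}$ is uniformly continuous with $\mathrm{supp}(f)\subset[0,1]^d$. Let $u,v:\overline{\mathbb{R}^d_+}\to\mathbb{R}$ be continuous, with $u$ a viscosity subsolution and $v$ a viscosity supersolution of \[u_{x_1}\cdots u_{x_d}=f\quad\text{on }\mathbb{R}^d_+,\] and suppose that $u(x)=u(\min(x_1,1),\dots,\min(x_d,1))$ for all $x\in\mathbb{R}^d_+$, and that $v$ is Pareto-monotone. If $u\le v$ on $\partial\mathbb{R}^d_+$, then $u\le v$ on $\mathbb{R}^d_+$.
   Context: $\mathbb{R}^d_+=\{x:x_i>0\ \forall i\}$; $x\leqq y$ means $x_i\le y_i$ for all $i$. A function $v$ is Pareto-monotone if $x\leqq y$ implies $v(x)\le v(y)$. Superdifferential $D^+u(x)$: all $p$ with $u(y)\le u(x)+\langle p,y-x\rangle+o(|y-x|)$ as $y\to x$; subdifferential $D^-u(x)$ defined with $\ge$. A continuous $u$ is a viscosity subsolution of $u_{x_1}\cdots u_{x_d}=f$ on $\mathbb{R}^d_+$ if $p_1\cdots p_d\le f^*(x)$ for all $x\in\mathbb{R}^d_+$, $p\in D^+u(x)$, and a viscosity supersolution if $p_1\cdots p_d\ge f_*(x)$ for all $x\in\mathbb{R}^d_+$, $p\in D^-u(x)$, where $f^*,f_*$ are the upper and lower semicontinuous envelopes of $f$. *)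

theory Defs
  imports "HOL-Analysis.Analysis" "HOL-Library.Extended_Real"
begin

definition pos_orthant :: "(real^'n) set" where
  "pos_orthant = {x. \<forall>i. 0 < x $ i}"

definition cl_orthant :: "(real^'n) set" where
  "cl_orthant = {x. \<forall>i. 0 \<le> x $ i}"

definition pareto_le :: "real^'n \<Rightarrow> real^'n \<Rightarrow> bool" where
  "pareto_le x y \<longleftrightarrow> (\<forall>i. x $ i \<le> y $ i)"

definition pareto_monotone_on :: "(real^'n) set \<Rightarrow> (real^'n \<Rightarrow> real) \<Rightarrow> bool" where
  "pareto_monotone_on S v \<longleftrightarrow> (\<forall>x\<in>S. \<forall>y\<in>S. pareto_le x y \<longrightarrow> v x \<le> v y)"

definition superdiff :: "(real^'n \<Rightarrow> real) \<Rightarrow> real^'n \<Rightarrow> (real^'n) set" where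
  "superdiff u x = {p. \<forall>e>0. \<forall>\<^sub>F y in at x. u y \<le> u x + p \<bullet> (y - x) + e * norm (y - x)}"

definition subdiff :: "(real^'n \<Rightarrow> real) \<Rightarrow> real^'n \<Rightarrow> (real^'n) set" where
  "subdiff u x = {p. \<forall>e>0. \<forall>\<^sub>F y in at x. u y \<ge> u x + p \<bullet> (y - x) - e * norm (y - x)}"

definition usc_env :: "(real^'n) set \<Rightarrow> (real^'n \<Rightarrow> real) \<Rightarrow> real^'n \<Rightarrow> ereal" where
  "usc_env S f x = (INF r\<in>{0<..}. SUP y\<in>S \<inter> ball x r. ereal (f y))"

definition lsc_env :: "(real^'n) set \<Rightarrow> (real^'n \<Rightarrow> real) \<Rightarrow> real^'n \<Rightarrow> ereal" where
  "lsc_env S f x = (SUP r\<in>{0<..}. INF y\<in>S \<inter> ball x r. ereal (f y))"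

definition visc_subsol :: "(real^'n \<Rightarrow> real) \<Rightarrow> (real^'n \<Rightarrow> real) \<Rightarrow> bool" where
  "visc_subsol f u \<longleftrightarrow> continuous_on cl_orthant u \<and>
     (\<forall>x\<in>pos_orthant. \<forall>p\<in>superdiff u x. ereal (\<Prod>i\<in>UNIV. p $ i) \<le> usc_env pos_orthant f x)"

definition visc_supersol :: "(real^'n \<Rightarrow> real) \<Rightarrow> (real^'n \<Rightarrow> real) \<Rightarrow> bool" where
  "visc_supersol f v \<longleftrightarrow> continuous_on cl_orthant v \<and>
     (\<forall>x\<in>pos_orthant. \<forall>p\<in>subdiff v x. ereal (\<Prod>i\<in>UNIV. p $ i) \<ge> lsc_env pos_orthant f x)"

end

theory Submission
  imports Defs
begin

lemma prod_plus_ge: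
  fixes a :: "'i \<Rightarrow> real"
  assumes "finite I" "I \<noteq> {}" "\<And>i. i \<in> I \<Longrightarrow> a i \<ge> 0" "e \<ge> 0"
  shows "(\<Prod>i\<in>I. a i + e) \<ge> (\<Prod>i\<in>I. a i) + e ^ card I"
  using assms
proof (induction I rule: finite_ne_induct)
  case (singleton j) then show ?case by simp
next
  case (insert j I)
  have P: "(\<Prod>i\<in>I. a i) \<ge> 0" using insert by (simp add: prod_nonneg)
  have IH: "(\<Prod>i\<in>I. a i + e) \<ge> (\<Prod>i\<in>I. a i) + e ^ card I" using insert by auto
  have aj: "a j \<ge> 0" using insert by auto
  have "(\<Prod>i\<in>insert j I. a i + e) = (a j + e) * (\<Prod>i\<in>I. a i + e)" using insert by simp
  also have "\<dots> \<ge> (a j + e) * ((\<Prod>i\<in>I. a i) + e ^ card I)"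
    using IH aj insert(6) by (intro mult_left_mono) auto
  finally have 1: "(\<Prod>i\<in>insert j I. a i + e) \<ge> (a j + e) * ((\<Prod>i\<in>I. a i) + e ^ card I)" .
  have "(a j + e) * ((\<Prod>i\<in>I. a i) + e ^ card I) \<ge> a j * (\<Prod>i\<in>I. a i) + e * e ^ card I"
    using aj P insert(6) by (simp add: algebra_simps)
  then show ?case using 1 insert by simp
qed

lemma superdiff_intro:
  fixes u :: "real^'n \<Rightarrow> real"
  assumes "open S" "x \<in> S" "c > 0"
    and "\<And>y. y \<in> S \<Longrightarrow> u y \<le> u x + q \<bullet> (y - x) + c * norm (y - x)^2"
  shows "q \<in> superdiff u x"
  unfolding superdiff_def
proof (clarsimp)
  fix e :: real assume e: "e > 0"
  obtain r where r: "r > 0" "ball x r \<subseteq> S" using assms(1,2) open_contains_ball by blast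
  show "\<forall>\<^sub>F y in at x. u y \<le> u x + q \<bullet> (y - x) + e * norm (y - x)"
    unfolding eventually_at
  proof (intro exI[of _ "min r (e/c)"] conjI ballI impI)
    show "min r (e/c) > 0" using r e assms(3) by simp
    fix y assume y: "y \<in> UNIV" "y \<noteq> x \<and> dist y x < min r (e / c)"
    have "y \<in> S" using y r by (auto simp: dist_commute)
    have n: "norm (y - x) < e / c" using y by (simp add: dist_norm)
    have "c * norm (y - x)^2 = (c * norm (y - x)) * norm (y - x)" by (simp add: power2_eq_square)
    also have "\<dots> \<le> e * norm (y - x)"
      using n assms(3) by (intro mult_right_mono) (auto simp: field_simps)
    finally show "u y \<le> u x + q \<bullet> (y - x) + e * norm (y - x)"
      using assms(4)[OF \<open>y \<in> S\<close>] by linarith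
  qed
qed

lemma subdiff_intro:
  fixes v :: "real^'n \<Rightarrow> real"
  assumes "open S" "x \<in> S" "c > 0"
    and "\<And>y. y \<in> S \<Longrightarrow> v y \<ge> v x + q \<bullet> (y - x) - c * norm (y - x)^2"
  shows "q \<in> subdiff v x"
  unfolding subdiff_def
proof (clarsimp)
  fix e :: real assume e: "e > 0"
  obtain r where r: "r > 0" "ball x r \<subseteq> S" using assms(1,2) open_contains_ball by blast
  show "\<forall>\<^sub>F y in at x. v x + q \<bullet> (y - x) - e * norm (y - x) \<le> v y"
    unfolding eventually_at
  proof (intro exI[of _ "min r (e/c)"] conjI ballI impI)
    show "min r (e/c) > 0" using r e assms(3) by simp
    fix y assume y: "y \<in> UNIV" "y \<noteq> x \<and> dist y x < min r (e / c)"
    have "y \<in> S" using y r by (auto simp: dist_commute)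
    have n: "norm (y - x) < e / c" using y by (simp add: dist_norm)
    have "c * norm (y - x)^2 = (c * norm (y - x)) * norm (y - x)" by (simp add: power2_eq_square)
    also have "\<dots> \<le> e * norm (y - x)"
      using n assms(3) by (intro mult_right_mono) (auto simp: field_simps)
    finally show "v x + q \<bullet> (y - x) - e * norm (y - x) \<le> v y"
      using assms(4)[OF \<open>y \<in> S\<close>] by linarith
  qed
qed


lemma subdiff_nonneg:
  fixes v :: "real^'n \<Rightarrow> real"
  assumes mono: "pareto_monotone_on cl_orthant v" and y: "y \<in> pos_orthant"
    and p: "p \<in> subdiff v y"
  shows "p $ i \<ge> 0"
proof (rule ccontr)
  assume "\<not> p $ i \<ge> 0"
  then have neg: "p $ i < 0" by simp
  define e where "e = - p $ i / 2"
  have e: "e > 0" using neg by (simp add: e_def)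
  have "\<forall>\<^sub>F w in at y. v w \<ge> v y + p \<bullet> (w - y) - e * norm (w - y)"
    using p e unfolding subdiff_def by auto
  then obtain d where d: "d > 0" "\<And>w. w \<noteq> y \<Longrightarrow> dist w y < d \<Longrightarrow> v w \<ge> v y + p \<bullet> (w - y) - e * norm (w - y)"
    unfolding eventually_at by auto
  define t where "t = min (d/2) (y $ i)"
  have yi: "y $ i > 0" using y by (simp add: pos_orthant_def)
  have t: "t > 0" "t < d" "t \<le> y $ i" using d yi by (auto simp: t_def)
  define w where "w = y - t *\<^sub>R axis i 1"
  have wy: "w - y = - (t *\<^sub>R axis i 1)" by (simp add: w_def)
  have nw: "norm (w - y) = t" using t by (simp add: wy)
  have "w \<noteq> y" using nw t by auto
  moreover have "dist w y < d" using nw t by (simp add: dist_norm)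
  ultimately have 1: "v w \<ge> v y + p \<bullet> (w - y) - e * norm (w - y)" using d by blast
  have ip: "p \<bullet> (w - y) = - t * p $ i" by (simp add: wy inner_axis)
  have "w \<in> cl_orthant" using y t unfolding cl_orthant_def pos_orthant_def w_def
    by (auto simp: axis_def less_imp_le)
  moreover have "y \<in> cl_orthant" using y unfolding cl_orthant_def pos_orthant_def by (auto simp: less_imp_le)
  moreover have "pareto_le w y" using t by (auto simp: pareto_le_def w_def axis_def)
  ultimately have "v w \<le> v y" using mono unfolding pareto_monotone_on_def by blast
  with 1 ip nw have "- t * p $ i - e * t \<le> 0" by simp
  moreover have "- t * p $ i - e * t = t * e" using e_def by (simp add: algebra_simps)
  ultimately show False using t e by (simp add: mult_pos_pos)
qed

definition clip :: "real^'n \<Rightarrow> real^'n" where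
  "clip x = (\<chi> i. min (x $ i) 1)"

lemma clip_dist:
  fixes x y :: "real^'n"
  assumes "\<forall>i. y $ i \<le> 1"
  shows "norm (clip x - y) \<le> norm (x - y)"
  unfolding norm_le inner_vec_def
proof (rule sum_mono)
  fix i
  have "\<bar>min (x $ i) 1 - y $ i\<bar> \<le> \<bar>x $ i - y $ i\<bar>" using assms by (auto simp: min_def)
  then have "(min (x $ i) 1 - y $ i)^2 \<le> (x $ i - y $ i)^2" by (simp add: abs_le_square_iff)
  then show "(clip x - y) $ i \<bullet> (clip x - y) $ i \<le> (x - y) $ i \<bullet> (x - y) $ i"
    by (simp add: clip_def power2_eq_square)
qed

lemma clip_dist':
  fixes x y :: "real^'n"
  assumes "\<forall>i. y $ i \<le> 1"
  shows "norm (y - clip x) \<le> norm (y - x)"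
  using clip_dist[OF assms, of x] by (simp add: norm_minus_commute)

lemma clip_pos: "x \<in> pos_orthant \<Longrightarrow> clip x \<in> pos_orthant"
  by (simp add: clip_def pos_orthant_def)

lemma clip_K: "x \<in> pos_orthant \<Longrightarrow> clip x \<in> cbox 0 1"
  by (simp add: clip_def pos_orthant_def interval_cart less_imp_le)

lemma clip_le: "pareto_le (clip x) x"
  by (simp add: clip_def pareto_le_def)

lemma clip_sum: "(\<Sum>i\<in>UNIV. clip x $ i) \<le> (\<Sum>i\<in>UNIV. x $ i)"
  by (rule sum_mono) (simp add: clip_def)

lemma usc_env_le:
  assumes "x \<in> S" "r > 0" "\<And>y. y \<in> S \<Longrightarrow> dist y x < r \<Longrightarrow> f y \<le> c"
  shows "usc_env S f x \<le> ereal c"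
proof -
  have "usc_env S f x \<le> (SUP y\<in>S \<inter> ball x r. ereal (f y))"
    unfolding usc_env_def using assms(2) by (intro INF_lower) auto
  also have "\<dots> \<le> ereal c" using assms(3) by (intro SUP_least) (auto simp: dist_commute)
  finally show ?thesis .
qed

lemma lsc_env_ge:
  assumes "x \<in> S" "r > 0" "\<And>y. y \<in> S \<Longrightarrow> dist y x < r \<Longrightarrow> f y \<ge> c"
  shows "lsc_env S f x \<ge> ereal c"
proof -
  have "ereal c \<le> (INF y\<in>S \<inter> ball x r. ereal (f y))"
    using assms(3) by (intro INF_greatest) (auto simp: dist_commute)
  also have "\<dots> \<le> lsc_env S f x"
    unfolding lsc_env_def using assms(2) by (intro SUP_upper) auto
  finally show ?thesis .
qed


lemma open_pos: "open (pos_orthant :: (real^'n) set)"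
proof -
  have "pos_orthant = (\<Inter>i\<in>UNIV. {x::real^'n. 0 < x $ i})" by (auto simp: pos_orthant_def)
  moreover have "open (\<Inter>i\<in>UNIV. {x::real^'n. 0 < x $ i})"
    by (rule open_INT) (auto intro!: open_Collect_less continuous_intros)
  ultimately show ?thesis by simp
qed

lemma norm_add_sq: "norm (a + b :: real^'n)^2 = norm a^2 + 2 * (a \<bullet> b) + norm b^2"
  by (simp add: power2_norm_eq_inner inner_add inner_commute)

lemma norm_diff_sq: "norm (a - b :: real^'n)^2 = norm a^2 - 2 * (a \<bullet> b) + norm b^2"
  by (simp add: power2_norm_eq_inner inner_diff inner_commute)

theorem theorem2p8:
  fixes f u v :: "real^'n \<Rightarrow> real"
  assumes "CARD('n) \<ge> 2"
    and "uniformly_continuous_on pos_orthant f"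
    and "closure {x\<in>pos_orthant. f x \<noteq> 0} \<subseteq> {x. \<forall>i. 0 \<le> x $ i \<and> x $ i \<le> 1}"
    and "continuous_on cl_orthant u" and "continuous_on cl_orthant v"
    and "visc_subsol f u" and "visc_supersol f v"
    and "\<forall>x\<in>pos_orthant. u x = u (\<chi> i. min (x $ i) 1)"
    and "pareto_monotone_on cl_orthant v"
    and "\<forall>x\<in>cl_orthant - pos_orthant. u x \<le> v x"
  shows "\<forall>x\<in>pos_orthant. u x \<le> v x"
proof (rule ccontr)
  note fuc = assms(2) and ucont = assms(4) and vcont = assms(5)
  note mono = assms(9) and bdry = assms(10)
  have uclip: "\<And>x. x \<in> pos_orthant \<Longrightarrow> u (clip x) = u x" using assms(8) by (simp add: clip_def)
  have sub: "\<And>x p. x \<in> pos_orthant \<Longrightarrow> p \<in> superdiff u x \<Longrightarrow> ereal (\<Prod>i\<in>UNIV. p $ i) \<le> usc_env pos_orthant f x"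
    using assms(6) by (simp add: visc_subsol_def)
  have sup: "\<And>x p. x \<in> pos_orthant \<Longrightarrow> p \<in> subdiff v x \<Longrightarrow> ereal (\<Prod>i\<in>UNIV. p $ i) \<ge> lsc_env pos_orthant f x"
    using assms(7) by (simp add: visc_supersol_def)
  have pos_cl: "pos_orthant \<subseteq> cl_orthant" by (auto simp: pos_orthant_def cl_orthant_def less_imp_le)
  define K :: "(real^'n) set" where "K = cbox 0 1"
  have Kcl: "K \<subseteq> cl_orthant" by (auto simp: K_def interval_cart cl_orthant_def)
  have K1: "\<And>x. x \<in> K \<Longrightarrow> \<forall>i. x $ i \<le> 1" by (auto simp: K_def interval_cart)
  have K0: "\<And>x i. x \<in> K \<Longrightarrow> x $ i \<ge> 0" by (auto simp: K_def interval_cart)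
  have Kc: "compact K" by (simp add: K_def)
  assume "\<not> (\<forall>x\<in>pos_orthant. u x \<le> v x)"
  then obtain x0 where x0: "x0 \<in> pos_orthant" "u x0 > v x0" by auto
  define z where "z = clip x0"
  have zK: "z \<in> K" "z \<in> pos_orthant" using x0 clip_K clip_pos by (auto simp: z_def K_def)
  have "v z \<le> v x0" using mono x0 zK pos_cl clip_le unfolding pareto_monotone_on_def z_def by blast
  moreover have "u z = u x0" using uclip x0 by (simp add: z_def)
  ultimately have zpos: "u z - v z > 0" using x0 by simp
  define \<delta>0 where "\<delta>0 = u z - v z"
  let ?d = "real CARD('n)"
  have d: "?d \<ge> 1" by simp
  define \<epsilon> where "\<epsilon> = \<delta>0 / (4 * ?d)"
  have \<epsilon>: "\<epsilon> > 0" using zpos d by (simp add: \<epsilon>_def \<delta>0_def)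
  define m0 where "m0 = \<delta>0 / 2"
  have m0: "m0 > 0" using zpos by (simp add: m0_def \<delta>0_def)
  have sz: "(\<Sum>i\<in>UNIV. z $ i) \<le> ?d"
  proof -
    have "(\<Sum>i\<in>UNIV. z $ i) \<le> ?d" using K1[OF zK(1)] sum_mono[of UNIV "\<lambda>i. z $ i" "\<lambda>i. 1"] by simp
    then show ?thesis by simp
  qed
  have zval: "u z - v z - \<epsilon> * (\<Sum>i\<in>UNIV. z $ i) \<ge> m0"
  proof -
    have "\<epsilon> * (\<Sum>i\<in>UNIV. z $ i) \<le> \<epsilon> * ?d" using sz \<epsilon> by (intro mult_left_mono) auto
    also have "\<epsilon> * ?d = \<delta>0 / 4" using d by (simp add: \<epsilon>_def)
    finally show ?thesis using zpos by (simp add: m0_def \<delta>0_def)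
  qed
  have ucK: "continuous_on K u" "continuous_on K v"
    using continuous_on_subset[OF ucont Kcl] continuous_on_subset[OF vcont Kcl] by auto
  obtain Bu where Bu: "\<forall>x\<in>K. norm (u x) \<le> Bu"
    using compact_imp_bounded[OF compact_continuous_image[OF ucK(1) Kc]] unfolding bounded_iff by auto
  obtain Bv where Bv: "\<forall>x\<in>K. norm (v x) \<le> Bv"
    using compact_imp_bounded[OF compact_continuous_image[OF ucK(2) Kc]] unfolding bounded_iff by auto
  define B where "B = max (max Bu Bv) 0"
  have B: "B \<ge> 0" "\<And>x. x \<in> K \<Longrightarrow> \<bar>u x\<bar> \<le> B" "\<And>x. x \<in> K \<Longrightarrow> \<bar>v x\<bar> \<le> B"
    using Bu Bv by (auto simp: B_def max_def)
  define \<delta> where "\<delta> = \<epsilon> ^ CARD('n) / 8"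
  have \<delta>: "\<delta> > 0" using \<epsilon> by (simp add: \<delta>_def)
  obtain \<eta>u where \<eta>u: "\<eta>u > 0" "\<And>x y. x \<in> K \<Longrightarrow> y \<in> K \<Longrightarrow> dist y x < \<eta>u \<Longrightarrow> dist (u y) (u x) < m0"
    using compact_uniformly_continuous[OF ucK(1) Kc] m0 unfolding uniformly_continuous_on_def by metis
  obtain \<eta>v where \<eta>v: "\<eta>v > 0" "\<And>x y. x \<in> K \<Longrightarrow> y \<in> K \<Longrightarrow> dist y x < \<eta>v \<Longrightarrow> dist (v y) (v x) < m0"
    using compact_uniformly_continuous[OF ucK(2) Kc] m0 unfolding uniformly_continuous_on_def by metis
  obtain \<eta>f where \<eta>f: "\<eta>f > 0" "\<And>x y. x \<in> pos_orthant \<Longrightarrow> y \<in> pos_orthant \<Longrightarrow> dist y x < \<eta>f \<Longrightarrow> dist (f y) (f x) < \<delta>"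
    using fuc \<delta> unfolding uniformly_continuous_on_def by metis
  define \<eta> where "\<eta> = min \<eta>u (min \<eta>v \<eta>f)"
  have \<eta>: "\<eta> > 0" using \<eta>u \<eta>v \<eta>f by (simp add: \<eta>_def)
  define \<alpha> where "\<alpha> = \<eta>^2 / (4 * B + 1)"
  have \<alpha>: "\<alpha> > 0" using \<eta> B by (simp add: \<alpha>_def)
  define c where "c = 1 / (2 * \<alpha>)"
  have c: "c > 0" using \<alpha> by (simp add: c_def)
  define \<Phi> where "\<Phi> = (\<lambda>w::(real^'n) \<times> (real^'n). u (fst w) - v (snd w) - \<epsilon> * (\<Sum>i\<in>UNIV. snd w $ i) - c * norm (fst w - snd w)^2)"
  have cont: "continuous_on (K \<times> K) \<Phi>"
  proof -
    have 1: "continuous_on (K \<times> K) (\<lambda>w. u (fst w))"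
      by (rule continuous_on_compose2[OF ucont continuous_on_fst]) (use Kcl in auto)
    have 2: "continuous_on (K \<times> K) (\<lambda>w. v (snd w))"
      by (rule continuous_on_compose2[OF vcont continuous_on_snd]) (use Kcl in auto)
    show ?thesis unfolding \<Phi>_def by (intro continuous_intros 1 2)
  qed
  obtain w where w: "w \<in> K \<times> K" "\<And>w'. w' \<in> K \<times> K \<Longrightarrow> \<Phi> w' \<le> \<Phi> w"
    using continuous_attains_sup[OF compact_Times[OF Kc Kc] _ cont] zK by blast
  define xa where "xa = fst w"
  define ya where "ya = snd w"
  have xyK: "xa \<in> K" "ya \<in> K" using w by (auto simp: xa_def ya_def mem_Times_iff)
  have max: "\<And>x y. x \<in> K \<Longrightarrow> y \<in> K \<Longrightarrow> \<Phi> (x, y) \<le> \<Phi> (xa, ya)"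
    using w by (auto simp: xa_def ya_def)
  have Phiw: "\<Phi> (xa, ya) \<ge> m0"
    using max[OF zK(1) zK(1)] zval by (simp add: \<Phi>_def)
  have sya: "(\<Sum>i\<in>UNIV. ya $ i) \<ge> 0" using K0[OF xyK(2)] by (simp add: sum_nonneg)
  have "c * norm (xa - ya)^2 \<le> u xa - v ya" using Phiw sya \<epsilon> m0
    by (simp add: \<Phi>_def) (smt (verit) mult_nonneg_nonneg)
  also have "\<dots> \<le> 2 * B" using B(2)[OF xyK(1)] B(3)[OF xyK(2)] by linarith
  finally have "norm (xa - ya)^2 \<le> 2 * B / c" using c by (simp add: field_simps)
  also have "2 * B / c = \<eta>^2 * (4 * B) / (4 * B + 1)" using B by (simp add: c_def \<alpha>_def field_simps)
  also have "\<dots> < \<eta>^2" using \<eta> B by (simp add: field_simps)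
  finally have "norm (xa - ya) < \<eta>" using \<eta> by (smt (verit) power_mono norm_ge_zero)
  then have dxy: "dist xa ya < \<eta>" "dist ya xa < \<eta>" by (auto simp: dist_norm norm_minus_commute)
  have uvle: "u xa - v ya \<ge> m0" using Phiw sya \<epsilon> c
    by (simp add: \<Phi>_def) (smt (verit) mult_nonneg_nonneg zero_le_power2)
  have xpos: "xa \<in> pos_orthant"
  proof (rule ccontr)
    assume "xa \<notin> pos_orthant"
    then have "u xa \<le> v xa" using bdry Kcl xyK by auto
    moreover have "dist (v xa) (v ya) < m0" using \<eta>v(2)[OF xyK(2) xyK(1)] dxy by (simp add: \<eta>_def)
    ultimately show False using uvle by (simp add: dist_real_def)
  qed
  have ypos: "ya \<in> pos_orthant"
  proof (rule ccontr)
    assume "ya \<notin> pos_orthant"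
    then have "u ya \<le> v ya" using bdry Kcl xyK by auto
    moreover have "dist (u xa) (u ya) < m0" using \<eta>u(2)[OF xyK(2) xyK(1)] dxy by (simp add: \<eta>_def)
    ultimately show False using uvle by (simp add: dist_real_def)
  qed
  define q where "q = (2 * c) *\<^sub>R (xa - ya)"
  define one :: "real^'n" where "one = (\<chi> i. 1)"
  define p where "p = q - \<epsilon> *\<^sub>R one"
  have qsup: "q \<in> superdiff u xa"
  proof (rule superdiff_intro[OF open_pos xpos c])
    fix y :: "real^'n" assume y: "y \<in> pos_orthant"
    have "\<Phi> (clip y, ya) \<le> \<Phi> (xa, ya)" using max[OF clip_K[OF y, folded K_def] xyK(2)] by simp
    moreover have "u (clip y) = u y" using uclip y by simp
    moreover have "norm (clip y - ya) \<le> norm (y - ya)" using clip_dist K1[OF xyK(2)] by blast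
    ultimately have "u y - c * norm (y - ya)^2 \<le> u xa - c * norm (xa - ya)^2"
      using c by (simp add: \<Phi>_def) (smt (verit) mult_left_mono power_mono norm_ge_zero)
    moreover have "norm (y - ya)^2 = norm (y - xa)^2 + 2 * ((y - xa) \<bullet> (xa - ya)) + norm (xa - ya)^2"
      using norm_add_sq[of "y - xa" "xa - ya"] by simp
    moreover have "q \<bullet> (y - xa) = 2 * c * ((y - xa) \<bullet> (xa - ya))" by (simp add: q_def inner_commute)
    ultimately show "u y \<le> u xa + q \<bullet> (y - xa) + c * norm (y - xa)^2" by (simp add: algebra_simps)
  qed
  have psub: "p \<in> subdiff v ya"
  proof (rule subdiff_intro[OF open_pos ypos c])
    fix y :: "real^'n" assume y: "y \<in> pos_orthant"
    have "\<Phi> (xa, clip y) \<le> \<Phi> (xa, ya)" using max[OF xyK(1) clip_K[OF y, folded K_def]] by simp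
    moreover have "v (clip y) \<le> v y"
      using mono clip_le clip_pos y pos_cl unfolding pareto_monotone_on_def by blast
    moreover have "norm (xa - clip y) \<le> norm (xa - y)" using clip_dist' K1[OF xyK(1)] by blast
    moreover have "(\<Sum>i\<in>UNIV. clip y $ i) \<le> (\<Sum>i\<in>UNIV. y $ i)" by (rule clip_sum)
    ultimately have "- v y - \<epsilon> * (\<Sum>i\<in>UNIV. y $ i) - c * norm (xa - y)^2 \<le> - v ya - \<epsilon> * (\<Sum>i\<in>UNIV. ya $ i) - c * norm (xa - ya)^2"
      using c \<epsilon> by (simp add: \<Phi>_def) (smt (verit) mult_left_mono power_mono norm_ge_zero)
    moreover have "c * norm (xa - y)^2 = c * norm (xa - ya)^2 - 2 * c * ((xa - ya) \<bullet> (y - ya)) + c * norm (y - ya)^2"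
    proof -
      have "norm (xa - y)^2 = norm (xa - ya)^2 - 2 * ((xa - ya) \<bullet> (y - ya)) + norm (y - ya)^2"
        using norm_diff_sq[of "xa - ya" "y - ya"] by simp
      then show ?thesis by (simp only: right_diff_distrib distrib_left mult.assoc)
    qed
    moreover have "\<epsilon> * (one \<bullet> (y - ya)) = \<epsilon> * (\<Sum>i\<in>UNIV. y $ i) - \<epsilon> * (\<Sum>i\<in>UNIV. ya $ i)"
      by (simp add: one_def inner_vec_def sum_subtractf right_diff_distrib)
    moreover have "p \<bullet> (y - ya) = 2 * c * ((xa - ya) \<bullet> (y - ya)) - \<epsilon> * (one \<bullet> (y - ya))"
      by (simp add: p_def q_def inner_diff_left)
    ultimately show "v y \<ge> v ya + p \<bullet> (y - ya) - c * norm (y - ya)^2" by linarith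
  qed
  have pnn: "\<And>i. p $ i \<ge> 0" using subdiff_nonneg[OF mono ypos psub] by blast
  have qp: "\<And>i. q $ i = p $ i + \<epsilon>" by (simp add: p_def one_def)
  have "(\<Prod>i\<in>UNIV. q $ i) \<ge> (\<Prod>i\<in>UNIV. p $ i) + \<epsilon> ^ CARD('n)"
    unfolding qp using prod_plus_ge[of UNIV "\<lambda>i. p $ i" \<epsilon>] pnn \<epsilon> by simp
  moreover have "ereal (\<Prod>i\<in>UNIV. q $ i) \<le> ereal (f xa + \<delta>)"
  proof -
    have "usc_env pos_orthant f xa \<le> ereal (f xa + \<delta>)"
    proof (rule usc_env_le[OF xpos \<eta>f(1)])
      fix y assume "y \<in> pos_orthant" "dist y xa < \<eta>f"
      then show "f y \<le> f xa + \<delta>" using \<eta>f(2)[OF xpos] by (force simp: dist_real_def)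
    qed
    then show ?thesis using sub[OF xpos qsup] by (meson order_trans)
  qed
  moreover have "ereal (\<Prod>i\<in>UNIV. p $ i) \<ge> ereal (f ya - \<delta>)"
  proof -
    have "lsc_env pos_orthant f ya \<ge> ereal (f ya - \<delta>)"
    proof (rule lsc_env_ge[OF ypos \<eta>f(1)])
      fix y assume "y \<in> pos_orthant" "dist y ya < \<eta>f"
      then show "f y \<ge> f ya - \<delta>" using \<eta>f(2)[OF ypos] by (force simp: dist_real_def)
    qed
    then show ?thesis using sup[OF ypos psub] by (meson order_trans)
  qed
  moreover have "dist (f ya) (f xa) < \<delta>" using \<eta>f(2)[OF xpos ypos] dxy by (simp add: \<eta>_def)
  ultimately have "\<epsilon> ^ CARD('n) < 3 * \<delta>" by (simp add: dist_real_def)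
  then show False using \<epsilon> by (simp add: \<delta>_def)
qed

end
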